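(* Suppose $\widehat Z^\natural$ satisfies the average case incoherence condition with parameter $\mu_0$, $\Omega$ follows the Bernoulli model with parameter $p\in(0,1]$, and $\widehat Z\in\mathbb C^{dn_1\times dn_2}$ is a fixed block diagonal matrix. Then with high probability $$\Big\|\Big(\tfrac1p\mathcal P_{\widehat T}\widehat{\mathcal G}\mathcal P_\Omega\widehat{\mathcal G}^*-\mathcal P_{\widehat T}\widehat{\mathcal G}\widehat{\mathcal G}^*\Big)\widehat Z\Big\|_{\widehat{\mathcal G},\infty}\le C\,\frac{\mu_0 r}{n}\Big(\sqrt{\tfrac{\log(dn)}{p}}\|\widehat Z\|_{\widehat{\mathcal G},F}+\tfrac{\log(dn)}{p}\|\widehat Z\|_{\widehat{\mathcal G},\infty}\Big)$$ for an absolute constant $C>0$.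
   Context: Let $d,n\ge1$ with $n$ odd and $n_1=n_2=(n+1)/2$. For $a\in[n]$, $w_a=\#\{(j,k)\in[n_1]\times[n_2]:j+k=a+1\}$, $G_a=w_a^{-1/2}\sum_{j+k=a+1}e_je_k^{\mathsf T}$, $\mathcal G(x)=\sum_ax_aG_a$. $F$ is the $d\times d$ unitary DFT matrix. $\widehat{\mathcal G}$ maps $X\in\mathbb C^{d\times n}$ to the block diagonal matrix whose $i$-th block is $\mathcal G$ of the $i$-th row of $FX$; $\widehat{\mathcal G}^*$ is its adjoint w.r.t. $\langle A,B\rangle=\mathrm{tr}(AB^{\mathsf H})$. $\widehat G_{j,k}=\widehat{\mathcal G}(e_je_k^{\mathsf T})=\mathrm{diag}(F_{1j}G_k,\dots,F_{dj}G_k)$. $\|\widehat Z\|_{\widehat{\mathcal G},F}=\big(\sum_{(j,k)}\frac1{dw_k}|\langle\widehat Z,\widehat G_{j,k}\rangle|^2\big)^{1/2}$, $\|\widehat Z\|_{\widehat{\mathcal G},\infty}=\max_{(j,k)}\frac1{\sqrt{dw_k}}|\langle\widehat Z,\widehat G_{j,k}\rangle|$. $\mathcal P_\Omega$ keeps entries in $\Omega\subset[d]\times[n]$ and zeroes the rest; Bernoulli model: each index in $\Omega$ independently with probability $p$. $\widehat Z^\natural=\mathrm{diag}(\widehat Z^\natural_a)$ with each block of rank $r$ and compact SVD $\widehat U_a\widehat\Sigma_a\widehat V_a^{\mathsf H}$; $\mathcal P_{\widehat T}$ acts blockwise by $W_a\mapsto\widehat U_a\widehat U_a^{\mathsf H}W_a+W_a\widehat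 V_a\widehat V_a^{\mathsf H}-\widehat U_a\widehat U_a^{\mathsf H}W_a\widehat V_a\widehat V_a^{\mathsf H}$. Average case incoherence with parameter $\mu_0$: $\max_i\frac1d\sum_a\|e_i^{\mathsf T}\widehat U_a\|_2^2\le\mu_0r/n$ and $\max_j\frac1d\sum_a\|e_j^{\mathsf T}\widehat V_a\|_2^2\le\mu_0r/n$. "With high probability": probability at least $1-c_1(dn)^{-c_2}$ for absolute constants $c_1,c_2>0$. *)

theory Defs
  imports Complex_Main
begin

text \<open>Conventions: all indices are 0-based. [n] = {0..<n}. A d x n matrix is a function
  nat => nat => complex read on {0..<d} x {0..<n}. A block diagonal matrix in
  C^{d n1 x d n2} with d blocks of size n1 x n2 is represented by the family of its
  diagonal blocks, a function nat => nat => nat => complex (block i, row j, column k).\<close>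

definition nh :: "nat \<Rightarrow> nat" where
  "nh n = (n + 1) div 2"   \<comment> \<open>n1 = n2 = (n+1)/2\<close>

definition wt :: "nat \<Rightarrow> nat \<Rightarrow> nat" where
  "wt n a = card {(j, k). j < nh n \<and> k < nh n \<and> j + k = a}"

definition Gbasis :: "nat \<Rightarrow> nat \<Rightarrow> nat \<Rightarrow> nat \<Rightarrow> complex" where
  "Gbasis n a j k = (if j < nh n \<and> k < nh n \<and> j + k = a
      then complex_of_real (1 / sqrt (real (wt n a))) else 0)"

definition hankel :: "nat \<Rightarrow> (nat \<Rightarrow> complex) \<Rightarrow> nat \<Rightarrow> nat \<Rightarrow> complex" where
  "hankel n x j k = (\<Sum>a<n. x a * Gbasis n a j k)"

definition dft :: "nat \<Rightarrow> nat \<Rightarrow> nat \<Rightarrow> complex" where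
  "dft d j k = cis (- 2 * pi * real (j * k) / real d) / complex_of_real (sqrt (real d))"

definition Ghat :: "nat \<Rightarrow> nat \<Rightarrow> (nat \<Rightarrow> nat \<Rightarrow> complex) \<Rightarrow> nat \<Rightarrow> nat \<Rightarrow> nat \<Rightarrow> complex" where
  "Ghat d n X i j k = hankel n (\<lambda>a. \<Sum>l<d. dft d i l * X l a) j k"

definition binner :: "nat \<Rightarrow> nat \<Rightarrow> (nat \<Rightarrow> nat \<Rightarrow> nat \<Rightarrow> complex) \<Rightarrow> (nat \<Rightarrow> nat \<Rightarrow> nat \<Rightarrow> complex) \<Rightarrow> complex" where
  "binner d n A B = (\<Sum>i<d. \<Sum>j<nh n. \<Sum>k<nh n. A i j k * cnj (B i j k))"

text \<open>Adjoint of Ghat w.r.t. tr(A B^H) (applied to block diagonal matrices), written out: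
  binner (Ghat X) W = sum over l<d, a<n of X l a * cnj (Ghat_adj W l a).\<close>
definition Ghat_adj :: "nat \<Rightarrow> nat \<Rightarrow> (nat \<Rightarrow> nat \<Rightarrow> nat \<Rightarrow> complex) \<Rightarrow> nat \<Rightarrow> nat \<Rightarrow> complex" where
  "Ghat_adj d n W l a = (\<Sum>i<d. \<Sum>j<nh n. \<Sum>k<nh n.
      cnj (dft d i l) * cnj (Gbasis n a j k) * W i j k)"

definition Ghat_basis :: "nat \<Rightarrow> nat \<Rightarrow> nat \<Rightarrow> nat \<Rightarrow> nat \<Rightarrow> nat \<Rightarrow> nat \<Rightarrow> complex" where
  "Ghat_basis d n j k = Ghat d n (\<lambda>l a. if l = j \<and> a = k then 1 else 0)"

definition normGF :: "nat \<Rightarrow> nat \<Rightarrow> (nat \<Rightarrow> nat \<Rightarrow> nat \<Rightarrow> complex) \<Rightarrow> real" where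
  "normGF d n Z = sqrt (\<Sum>j<d. \<Sum>k<n.
      (cmod (binner d n Z (Ghat_basis d n j k)))\<^sup>2 / (real d * real (wt n k)))"

definition normGinf :: "nat \<Rightarrow> nat \<Rightarrow> (nat \<Rightarrow> nat \<Rightarrow> nat \<Rightarrow> complex) \<Rightarrow> real" where
  "normGinf d n Z = Max ((\<lambda>(j, k). cmod (binner d n Z (Ghat_basis d n j k))
      / sqrt (real d * real (wt n k))) ` ({..<d} \<times> {..<n}))"

definition P_Omega :: "(nat \<times> nat) set \<Rightarrow> (nat \<Rightarrow> nat \<Rightarrow> complex) \<Rightarrow> nat \<Rightarrow> nat \<Rightarrow> complex" where
  "P_Omega \<Omega> X l a = (if (l, a) \<in> \<Omega> then X l a else 0)"

text \<open>Blockwise projection onto the tangent space; U i, V i are the n1 x r and n2 x r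
  singular vector matrices of the i-th block.\<close>
definition P_T :: "nat \<Rightarrow> nat \<Rightarrow> (nat \<Rightarrow> nat \<Rightarrow> nat \<Rightarrow> complex) \<Rightarrow> (nat \<Rightarrow> nat \<Rightarrow> nat \<Rightarrow> complex)
    \<Rightarrow> (nat \<Rightarrow> nat \<Rightarrow> nat \<Rightarrow> complex) \<Rightarrow> nat \<Rightarrow> nat \<Rightarrow> nat \<Rightarrow> complex" where
  "P_T n r U V W i j k =
     (let PU = (\<lambda>j j'. \<Sum>s<r. U i j s * cnj (U i j' s));
          PV = (\<lambda>k' k. \<Sum>s<r. V i k' s * cnj (V i k s))
      in (\<Sum>j'<nh n. PU j j' * W i j' k) + (\<Sum>k'<nh n. W i j k' * PV k' k)
         - (\<Sum>j'<nh n. \<Sum>k'<nh n. PU j j' * W i j' k' * PV k' k))"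

definition compact_svd :: "nat \<Rightarrow> nat \<Rightarrow> nat \<Rightarrow> (nat \<Rightarrow> nat \<Rightarrow> nat \<Rightarrow> complex)
    \<Rightarrow> (nat \<Rightarrow> nat \<Rightarrow> nat \<Rightarrow> complex) \<Rightarrow> (nat \<Rightarrow> nat \<Rightarrow> real) \<Rightarrow> (nat \<Rightarrow> nat \<Rightarrow> nat \<Rightarrow> complex) \<Rightarrow> bool" where
  "compact_svd d n r Zn U \<sigma> V \<longleftrightarrow>
     (\<forall>i<d. \<forall>s<r. \<forall>t<r. (\<Sum>j<nh n. cnj (U i j s) * U i j t) = (if s = t then 1 else 0)) \<and>
     (\<forall>i<d. \<forall>s<r. \<forall>t<r. (\<Sum>k<nh n. cnj (V i k s) * V i k t) = (if s = t then 1 else 0)) \<and>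
     (\<forall>i<d. \<forall>s<r. \<sigma> i s > 0) \<and>
     (\<forall>i<d. \<forall>j<nh n. \<forall>k<nh n.
        Zn i j k = (\<Sum>s<r. U i j s * complex_of_real (\<sigma> i s) * cnj (V i k s)))"

definition avg_incoherent :: "nat \<Rightarrow> nat \<Rightarrow> nat \<Rightarrow> real \<Rightarrow> (nat \<Rightarrow> nat \<Rightarrow> nat \<Rightarrow> complex)
    \<Rightarrow> (nat \<Rightarrow> nat \<Rightarrow> nat \<Rightarrow> complex) \<Rightarrow> bool" where
  "avg_incoherent d n r \<mu>0 U V \<longleftrightarrow>
     (\<forall>j<nh n. (1 / real d) * (\<Sum>i<d. \<Sum>s<r. (cmod (U i j s))\<^sup>2) \<le> \<mu>0 * real r / real n) \<and>
     (\<forall>k<nh n. (1 / real d) * (\<Sum>i<d. \<Sum>s<r. (cmod (V i k s))\<^sup>2) \<le> \<mu>0 * real r / real n)"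

definition bernoulli_prob :: "nat \<Rightarrow> nat \<Rightarrow> real \<Rightarrow> ((nat \<times> nat) set \<Rightarrow> bool) \<Rightarrow> real" where
  "bernoulli_prob d n p E = (\<Sum>\<Omega>\<in>Pow ({..<d} \<times> {..<n}).
      if E \<Omega> then p ^ card \<Omega> * (1 - p) ^ (d * n - card \<Omega>) else 0)"

definition deviation :: "nat \<Rightarrow> nat \<Rightarrow> nat \<Rightarrow> real \<Rightarrow> (nat \<times> nat) set
    \<Rightarrow> (nat \<Rightarrow> nat \<Rightarrow> nat \<Rightarrow> complex) \<Rightarrow> (nat \<Rightarrow> nat \<Rightarrow> nat \<Rightarrow> complex)
    \<Rightarrow> (nat \<Rightarrow> nat \<Rightarrow> nat \<Rightarrow> complex) \<Rightarrow> nat \<Rightarrow> nat \<Rightarrow> nat \<Rightarrow> complex" where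
  "deviation d n r p \<Omega> U V Z i j k =
     complex_of_real (1 / p) * P_T n r U V (Ghat d n (P_Omega \<Omega> (Ghat_adj d n Z))) i j k
     - P_T n r U V (Ghat d n (Ghat_adj d n Z)) i j k"

end

theory Submission
  imports Defs
begin


lemma exp_le_quad: fixes y :: real assumes "\<bar>y\<bar> \<le> 1" shows "exp y \<le> 1 + y + y\<^sup>2"
proof (cases "y \<ge> 0")
  case True thus ?thesis using exp_bound[of y] assms by auto
next
  case False
  have "1 - y \<le> exp (-y)" using exp_ge_add_one_self[of "-y"] by simp
  hence "exp y \<le> 1 / (1 - y)" using False by (simp add: exp_minus field_simps)
  also have "\<dots> \<le> 1 + y + y\<^sup>2"
  proof -
    have e: "(1 - y) * (1 + y + y\<^sup>2) = 1 - y^3" by (simp add: algebra_simps power2_eq_square power3_eq_cube)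
    have "y^3 \<le> 0" proof -
      have "y^3 = y * y\<^sup>2" by (simp add: power3_eq_cube power2_eq_square)
      thus ?thesis using False by (simp add: mult_nonpos_nonneg)
    qed
    hence "1 \<le> (1 - y) * (1 + y + y\<^sup>2)" using e by simp
    thus ?thesis using False by (simp add: field_simps)
  qed
  finally show ?thesis .
qed

definition wgt :: "'a set \<Rightarrow> real \<Rightarrow> 'a set \<Rightarrow> real" where
  "wgt S p \<Omega> = p ^ card \<Omega> * (1 - p) ^ (card S - card \<Omega>)"

lemma prod_formula:
  fixes h :: "'a \<Rightarrow> bool \<Rightarrow> real"
  assumes "finite S"
  shows "(\<Sum>\<Omega>\<in>Pow S. wgt S p \<Omega> * (\<Prod>x\<in>S. h x (x \<in> \<Omega>)))
       = (\<Prod>x\<in>S. (1 - p) * h x False + p * h x True)"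
  using assms
proof (induction S rule: finite_induct)
  case empty thus ?case by (simp add: wgt_def)
next
  case (insert a S)
  have fin: "finite S" by fact
  have P: "Pow (insert a S) = Pow S \<union> insert a ` Pow S" by (rule Pow_insert)
  have disj: "Pow S \<inter> insert a ` Pow S = {}" using insert.hyps by auto
  have inj: "inj_on (insert a) (Pow S)" using insert.hyps by (auto simp: inj_on_def)
  have A: "\<And>\<Omega>. \<Omega> \<in> Pow S \<Longrightarrow> wgt (insert a S) p \<Omega> * (\<Prod>x\<in>insert a S. h x (x \<in> \<Omega>))
       = ((1 - p) * h a False) * (wgt S p \<Omega> * (\<Prod>x\<in>S. h x (x \<in> \<Omega>)))"
  proof -
    fix \<Omega> assume "\<Omega> \<in> Pow S"
    hence sub: "\<Omega> \<subseteq> S" by auto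
    hence "card \<Omega> \<le> card S" using fin card_mono by blast
    hence e: "Suc (card S) - card \<Omega> = Suc (card S - card \<Omega>)" by simp
    have "a \<notin> \<Omega>" using sub insert.hyps by auto
    thus "?thesis \<Omega>" using insert.hyps e by (simp add: wgt_def)
  qed
  have B: "\<And>\<Omega>. \<Omega> \<in> Pow S \<Longrightarrow> wgt (insert a S) p (insert a \<Omega>) * (\<Prod>x\<in>insert a S. h x (x \<in> insert a \<Omega>))
       = (p * h a True) * (wgt S p \<Omega> * (\<Prod>x\<in>S. h x (x \<in> \<Omega>)))"
  proof -
    fix \<Omega> assume "\<Omega> \<in> Pow S"
    hence sub: "\<Omega> \<subseteq> S" by auto
    have fo: "finite \<Omega>" using sub fin finite_subset by blast
    have "a \<notin> \<Omega>" using sub insert.hyps by auto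
    hence c: "card (insert a \<Omega>) = Suc (card \<Omega>)" using fo by simp
    have pr: "(\<Prod>x\<in>S. h x (x \<in> insert a \<Omega>)) = (\<Prod>x\<in>S. h x (x \<in> \<Omega>))"
      proof (intro prod.cong refl)
      fix x assume "x \<in> S" hence "x \<noteq> a" using insert.hyps by auto
      thus "h x (x \<in> insert a \<Omega>) = h x (x \<in> \<Omega>)" by simp
    qed
    show "?thesis \<Omega>" using insert.hyps c pr by (simp add: wgt_def)
  qed
  have "(\<Sum>\<Omega>\<in>Pow (insert a S). wgt (insert a S) p \<Omega> * (\<Prod>x\<in>insert a S. h x (x \<in> \<Omega>)))
     = (\<Sum>\<Omega>\<in>Pow S. wgt (insert a S) p \<Omega> * (\<Prod>x\<in>insert a S. h x (x \<in> \<Omega>)))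
     + (\<Sum>\<Omega>\<in>insert a ` Pow S. wgt (insert a S) p \<Omega> * (\<Prod>x\<in>insert a S. h x (x \<in> \<Omega>)))"
    unfolding P using disj fin by (intro sum.union_disjoint) auto
  also have "\<dots> = ((1 - p) * h a False) * (\<Sum>\<Omega>\<in>Pow S. wgt S p \<Omega> * (\<Prod>x\<in>S. h x (x \<in> \<Omega>)))
     + (p * h a True) * (\<Sum>\<Omega>\<in>Pow S. wgt S p \<Omega> * (\<Prod>x\<in>S. h x (x \<in> \<Omega>)))"
  proof -
    have 1: "(\<Sum>\<Omega>\<in>Pow S. wgt (insert a S) p \<Omega> * (\<Prod>x\<in>insert a S. h x (x \<in> \<Omega>)))
      = ((1 - p) * h a False) * (\<Sum>\<Omega>\<in>Pow S. wgt S p \<Omega> * (\<Prod>x\<in>S. h x (x \<in> \<Omega>)))"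
      unfolding sum_distrib_left by (rule sum.cong[OF refl]) (rule A)
    have 2: "(\<Sum>\<Omega>\<in>insert a ` Pow S. wgt (insert a S) p \<Omega> * (\<Prod>x\<in>insert a S. h x (x \<in> \<Omega>)))
      = (p * h a True) * (\<Sum>\<Omega>\<in>Pow S. wgt S p \<Omega> * (\<Prod>x\<in>S. h x (x \<in> \<Omega>)))"
      unfolding sum_distrib_left sum.reindex[OF inj] o_def by (rule sum.cong[OF refl]) (rule B)
    show ?thesis using 1 2 by simp
  qed
  also have "\<dots> = (\<Prod>x\<in>insert a S. (1 - p) * h x False + p * h x True)"
    using insert by (simp add: algebra_simps)
  finally show ?case .
qed

definition bp :: "'a set \<Rightarrow> real \<Rightarrow> ('a set \<Rightarrow> bool) \<Rightarrow> real" where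
  "bp S p E = (\<Sum>\<Omega>\<in>Pow S. if E \<Omega> then wgt S p \<Omega> else 0)"

lemma wgt_nonneg: "0 \<le> p \<Longrightarrow> p \<le> 1 \<Longrightarrow> 0 \<le> wgt S p \<Omega>"
  by (simp add: wgt_def)

lemma wgt_total: "finite S \<Longrightarrow> (\<Sum>\<Omega>\<in>Pow S. wgt S p \<Omega>) = 1"
  using prod_formula[of S p "\<lambda>_ _. 1"] by simp

lemma bp_compl: "finite S \<Longrightarrow> bp S p E = 1 - bp S p (\<lambda>\<Omega>. \<not> E \<Omega>)"
proof -
  assume f: "finite S"
  have "bp S p E + bp S p (\<lambda>\<Omega>. \<not> E \<Omega>) = (\<Sum>\<Omega>\<in>Pow S. wgt S p \<Omega>)"
    unfolding bp_def sum.distrib[symmetric] by (rule sum.cong) auto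
  thus ?thesis using wgt_total[OF f] by simp
qed

lemma bp_mono: "0 \<le> p \<Longrightarrow> p \<le> 1 \<Longrightarrow> (\<And>\<Omega>. \<Omega> \<subseteq> S \<Longrightarrow> E \<Omega> \<Longrightarrow> F \<Omega>) \<Longrightarrow> bp S p E \<le> bp S p F"
  unfolding bp_def by (intro sum_mono) (auto simp: wgt_nonneg)

lemma bp_union:
  assumes "finite Y" "0 \<le> p" "p \<le> 1"
  shows "bp S p (\<lambda>\<Omega>. \<exists>y\<in>Y. E y \<Omega>) \<le> (\<Sum>y\<in>Y. bp S p (E y))"
  using assms(1)
proof (induction Y rule: finite_induct)
  case empty thus ?case by (simp add: bp_def)
next
  case (insert y Y)
  have "bp S p (\<lambda>\<Omega>. \<exists>z\<in>insert y Y. E z \<Omega>) \<le> bp S p (E y) + bp S p (\<lambda>\<Omega>. \<exists>z\<in>Y. E z \<Omega>)"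
    unfolding bp_def sum.distrib[symmetric] by (intro sum_mono) (auto simp: wgt_nonneg assms)
  thus ?case using insert by simp
qed

lemma bp_markov:
  assumes "0 \<le> p" "p \<le> 1" "\<And>\<Omega>. \<Omega> \<subseteq> S \<Longrightarrow> 0 \<le> f \<Omega>" "\<And>\<Omega>. \<Omega> \<subseteq> S \<Longrightarrow> E \<Omega> \<Longrightarrow> 1 \<le> f \<Omega>"
  shows "bp S p E \<le> (\<Sum>\<Omega>\<in>Pow S. wgt S p \<Omega> * f \<Omega>)"
  unfolding bp_def
proof (intro sum_mono)
  fix \<Omega> assume "\<Omega> \<in> Pow S"
  hence s: "\<Omega> \<subseteq> S" by auto
  have w: "0 \<le> wgt S p \<Omega>" using assms wgt_nonneg by blast
  show "(if E \<Omega> then wgt S p \<Omega> else 0) \<le> wgt S p \<Omega> * f \<Omega>"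
    using w assms(3,4)[OF s] by (auto simp: mult_nonneg_nonneg) (metis mult.right_neutral mult_left_mono)
qed

lemma factor_bound:
  fixes p u :: real
  assumes "0 < p" "p \<le> 1" "\<bar>u\<bar> \<le> p"
  shows "(1 - p) * exp (- u) + p * exp (u * (1 / p - 1)) \<le> exp (u\<^sup>2 / p)"
proof -
  have e1: "exp (- u) \<le> 1 - u + u\<^sup>2" using exp_le_quad[of "-u"] assms by simp
  have a2: "\<bar>u * (1 / p - 1)\<bar> \<le> 1"
  proof -
    have "0 \<le> 1/p - 1" using assms by (simp add: field_simps)
    hence "\<bar>u * (1 / p - 1)\<bar> = \<bar>u\<bar> * (1/p - 1)" by (simp add: abs_mult)
    also have "\<dots> \<le> p * (1/p - 1)" using assms by (intro mult_right_mono) (auto simp: field_simps)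
    also have "\<dots> = 1 - p" using assms by (simp add: field_simps)
    finally show ?thesis using assms by simp
  qed
  have e2: "exp (u * (1 / p - 1)) \<le> 1 + u * (1 / p - 1) + (u * (1 / p - 1))\<^sup>2"
    using exp_le_quad[OF a2] .
  have "(1 - p) * exp (- u) + p * exp (u * (1 / p - 1))
      \<le> (1 - p) * (1 - u + u\<^sup>2) + p * (1 + u * (1 / p - 1) + (u * (1 / p - 1))\<^sup>2)"
    using assms e1 e2 by (intro add_mono mult_left_mono) auto
  also have "\<dots> = 1 + u\<^sup>2 * (1 - p) / p"
    using assms by (simp add: field_simps power2_eq_square)
  also have "\<dots> \<le> 1 + u\<^sup>2 / p" using assms by (intro add_left_mono divide_right_mono) (auto simp: mult_left_le)
  also have "\<dots> \<le> exp (u\<^sup>2 / p)" by (rule exp_ge_add_one_self)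
  finally show ?thesis .
qed

definition devsum :: "'a set \<Rightarrow> real \<Rightarrow> ('a \<Rightarrow> real) \<Rightarrow> 'a set \<Rightarrow> real" where
  "devsum S p b \<Omega> = (\<Sum>x\<in>S. ((if x \<in> \<Omega> then 1 else 0) / p - 1) * b x)"

lemma mgf_bound:
  assumes "finite S" "0 < p" "p \<le> 1" "0 \<le> t" "\<And>x. x \<in> S \<Longrightarrow> t * \<bar>b x\<bar> \<le> p"
  shows "(\<Sum>\<Omega>\<in>Pow S. wgt S p \<Omega> * exp (t * devsum S p b \<Omega>)) \<le> exp (t\<^sup>2 * (\<Sum>x\<in>S. (b x)\<^sup>2) / p)"
proof -
  have "\<And>\<Omega>. exp (t * devsum S p b \<Omega>) = (\<Prod>x\<in>S. (\<lambda>x \<beta>. exp (t * (((if \<beta> then 1 else 0) / p - 1) * b x))) x (x \<in> \<Omega>))"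
    unfolding devsum_def sum_distrib_left using assms(1) by (simp add: exp_sum)
  hence "(\<Sum>\<Omega>\<in>Pow S. wgt S p \<Omega> * exp (t * devsum S p b \<Omega>))
     = (\<Prod>x\<in>S. (1 - p) * exp (t * ((0 / p - 1) * b x)) + p * exp (t * ((1 / p - 1) * b x)))"
    using prod_formula[OF assms(1), of p "\<lambda>x \<beta>. exp (t * (((if \<beta> then 1 else 0) / p - 1) * b x))"] by simp
  also have "\<dots> \<le> (\<Prod>x\<in>S. exp ((t * b x)\<^sup>2 / p))"
  proof (intro prod_mono conjI)
    fix x assume x: "x \<in> S"
    have "\<bar>t * b x\<bar> \<le> p" using assms(4) assms(5)[OF x] by (simp add: abs_mult)
    from factor_bound[OF assms(2,3) this]
    show "(1 - p) * exp (t * ((0 / p - 1) * b x)) + p * exp (t * ((1 / p - 1) * b x)) \<le> exp ((t * b x)\<^sup>2 / p)"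
      by (simp add: algebra_simps)
    show "0 \<le> (1 - p) * exp (t * ((0 / p - 1) * b x)) + p * exp (t * ((1 / p - 1) * b x))"
      using assms by (intro add_nonneg_nonneg mult_nonneg_nonneg) auto
  qed
  also have "\<dots> = exp (t\<^sup>2 * (\<Sum>x\<in>S. (b x)\<^sup>2) / p)"
    using assms(1) by (simp add: exp_sum[symmetric] sum_divide_distrib sum_distrib_left power_mult_distrib)
  finally show ?thesis .
qed

lemma tail_bound:
  assumes S: "finite S" and p: "0 < p" "p \<le> 1" and B: "0 \<le> B" "\<And>x. x \<in> S \<Longrightarrow> \<bar>b x\<bar> \<le> B"
    and l: "0 \<le> l"
  shows "bp S p (\<lambda>\<Omega>. devsum S p b \<Omega> > 2 * sqrt (l * (\<Sum>x\<in>S. (b x)\<^sup>2) / p) + 2 * l * B / p) \<le> exp (- l)"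
proof -
  define s2 where "s2 = (\<Sum>x\<in>S. (b x)\<^sup>2)"
  define thr where "thr = 2 * sqrt (l * s2 / p) + 2 * l * B / p"
  have s2nn: "0 \<le> s2" unfolding s2_def by (intro sum_nonneg) auto
  have thrnn: "0 \<le> thr" unfolding thr_def using p B l s2nn by auto
  show ?thesis
  proof (cases "s2 = 0")
    case True
    hence "\<forall>x\<in>S. (b x)\<^sup>2 = 0" unfolding s2_def using S by (subst (asm) sum_nonneg_eq_0_iff) auto
    hence "\<And>\<Omega>. devsum S p b \<Omega> = 0" unfolding devsum_def by simp
    hence "bp S p (\<lambda>\<Omega>. devsum S p b \<Omega> > thr) = 0" using thrnn unfolding bp_def by simp
    thus ?thesis unfolding thr_def s2_def by simp
  next
    case False
    hence s2p: "0 < s2" using s2nn by simp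
    have Bp: "0 < B"
    proof (rule ccontr)
      assume "\<not> 0 < B" hence "\<forall>x\<in>S. b x = 0" using B by force
      hence "s2 = 0" unfolding s2_def by simp
      thus False using False by simp
    qed
    define t where "t = min (sqrt (l * p / s2)) (p / B)"
    have t0: "0 \<le> t" unfolding t_def using p Bp l s2p by auto
    have tB: "t * B \<le> p" unfolding t_def using Bp by (simp add: min_def field_simps)
    have key: "t\<^sup>2 * s2 / p - t * thr \<le> - l"
    proof (cases "sqrt (l * p / s2) \<le> p / B")
      case True
      hence tt: "t = sqrt (l * p / s2)" unfolding t_def by simp
      have a: "t\<^sup>2 * s2 / p = l" unfolding tt using l p s2p by simp
      have e: "l * p / s2 * (l * s2 / p) = l\<^sup>2" using p s2p by (simp add: field_simps power2_eq_square)
      have "sqrt (l * p / s2) * sqrt (l * s2 / p) = l"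
        using e l by (metis real_sqrt_mult real_sqrt_abs abs_of_nonneg)
      hence "t * (2 * sqrt (l * s2 / p)) = 2 * l" unfolding tt by simp
      hence b: "t * (2 * sqrt (l * s2 / p)) = 2 * l" .
      have "0 \<le> t * (2 * l * B / p)" using t0 l Bp p by simp
      moreover have "t * thr = t * (2 * sqrt (l * s2 / p)) + t * (2 * l * B / p)" unfolding thr_def by (simp add: distrib_left)
      ultimately have "t * thr \<ge> 2 * l" using b by linarith
      thus ?thesis using a by simp
    next
      case False
      hence tt: "t = p / B" unfolding t_def by simp
      have "(p / B)\<^sup>2 < (sqrt (l * p / s2))\<^sup>2" using False p Bp by (intro power_strict_mono) auto
      hence "(p / B)\<^sup>2 < l * p / s2" using l p s2p by simp
      hence "(p / B)\<^sup>2 * s2 / p < l * p / s2 * s2 / p" using p s2p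
        by (intro divide_strict_right_mono mult_strict_right_mono) auto
      also have "l * p / s2 * s2 / p = l" using p s2p by simp
      finally have a: "t\<^sup>2 * s2 / p \<le> l" unfolding tt by simp
      have b: "t * (2 * l * B / p) = 2 * l" unfolding tt using p Bp by simp
      have "0 \<le> t * (2 * sqrt (l * s2 / p))" using t0 l s2p p by simp
      moreover have "t * thr = t * (2 * sqrt (l * s2 / p)) + t * (2 * l * B / p)" unfolding thr_def by (simp add: distrib_left)
      ultimately have "t * thr \<ge> 2 * l" using b by linarith
      thus ?thesis using a by simp
    qed
    have "bp S p (\<lambda>\<Omega>. devsum S p b \<Omega> > thr) \<le> (\<Sum>\<Omega>\<in>Pow S. wgt S p \<Omega> * (exp (t * devsum S p b \<Omega>) * exp (- t * thr)))"
    proof (rule bp_markov)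
      fix \<Omega> assume "devsum S p b \<Omega> > thr"
      hence "0 \<le> t * devsum S p b \<Omega> + - t * thr" using t0
        by (simp add: algebra_simps mult_left_mono)
      thus "1 \<le> exp (t * devsum S p b \<Omega>) * exp (- t * thr)"
        by (simp add: exp_add[symmetric])
    qed (use p in auto)
    also have "\<dots> = (\<Sum>\<Omega>\<in>Pow S. wgt S p \<Omega> * exp (t * devsum S p b \<Omega>)) * exp (- t * thr)"
      by (simp add: sum_distrib_right mult.assoc)
    also have "\<dots> \<le> exp (t\<^sup>2 * s2 / p) * exp (- t * thr)"
      unfolding s2_def
      by (intro mult_right_mono mgf_bound[OF S p t0]) (use t0 B in \<open>auto intro: order.trans[OF mult_left_mono tB]\<close>)
    also have "\<dots> = exp (t\<^sup>2 * s2 / p - t * thr)" by (simp add: exp_add[symmetric])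
    also have "\<dots> \<le> exp (- l)" using key by simp
    finally show ?thesis unfolding thr_def s2_def .
  qed
qed



definition pf :: "nat \<Rightarrow> (nat \<Rightarrow> nat \<Rightarrow> nat \<Rightarrow> complex) \<Rightarrow> nat \<Rightarrow> nat \<Rightarrow> nat \<Rightarrow> complex" where
  "pf r U i x y = (\<Sum>s<r. U i x s * cnj (U i y s))"

definition al :: "nat \<Rightarrow> (nat \<Rightarrow> nat \<Rightarrow> nat \<Rightarrow> complex) \<Rightarrow> nat \<Rightarrow> nat \<Rightarrow> real" where
  "al r U i x = (\<Sum>s<r. (cmod (U i x s))\<^sup>2)"

lemma al_nonneg: "0 \<le> al r U i x" unfolding al_def by (intro sum_nonneg) auto

lemma pf_swap: "pf r U i y x = cnj (pf r U i x y)"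
  unfolding pf_def by (simp add: mult.commute)

lemma pf_bound: "cmod (pf r U i x y) \<le> (al r U i x + al r U i y) / 2"
proof -
  have "cmod (pf r U i x y) \<le> (\<Sum>s<r. cmod (U i x s) * cmod (U i y s))"
    unfolding pf_def by (rule order.trans[OF norm_sum]) (simp add: norm_mult)
  also have "\<dots> \<le> (\<Sum>s<r. ((cmod (U i x s))\<^sup>2 + (cmod (U i y s))\<^sup>2) / 2)"
  proof (intro sum_mono)
    fix s
    have "0 \<le> (cmod (U i x s) - cmod (U i y s))\<^sup>2" by simp
    thus "cmod (U i x s) * cmod (U i y s) \<le> ((cmod (U i x s))\<^sup>2 + (cmod (U i y s))\<^sup>2) / 2"
      by (simp add: power2_eq_square algebra_simps)
  qed
  also have "\<dots> = (al r U i x + al r U i y) / 2"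
    unfolding al_def sum.distrib[symmetric] sum_divide_distrib[symmetric] by simp
  finally show ?thesis .
qed

lemma pf_bessel:
  assumes orth: "\<forall>s<r. \<forall>t<r. (\<Sum>j<m. cnj (U i j s) * U i j t) = (if s = t then 1 else 0)"
  shows "(\<Sum>y<m. (cmod (pf r U i x y))\<^sup>2) = al r U i x"
proof -
  have "complex_of_real (\<Sum>y<m. (cmod (pf r U i x y))\<^sup>2) = (\<Sum>y<m. pf r U i x y * cnj (pf r U i x y))"
    by (simp only: of_real_sum complex_norm_square)
  also have "\<dots> = (\<Sum>y<m. \<Sum>s<r. \<Sum>t<r. U i x s * cnj (U i x t) * (cnj (U i y s) * U i y t))"
    unfolding pf_def by (simp add: sum_distrib_left sum_distrib_right mult_ac)
  also have "\<dots> = (\<Sum>s<r. \<Sum>t<r. U i x s * cnj (U i x t) * (\<Sum>y<m. cnj (U i y s) * U i y t))"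
    by (simp add: sum_distrib_left sum.swap[of _ "{..<m}"])
  also have "\<dots> = (\<Sum>s<r. \<Sum>t<r. U i x s * cnj (U i x t) * (if s = t then 1 else 0))"
    using orth by (intro sum.cong refl) auto
  also have "\<dots> = (\<Sum>s<r. U i x s * cnj (U i x s))"
    by (simp add: if_distrib cong: if_cong)
  also have "\<dots> = complex_of_real (al r U i x)"
    unfolding al_def by (simp only: of_real_sum complex_norm_square)
  finally show ?thesis using of_real_eq_iff by blast
qed



abbreviation gw :: "nat \<Rightarrow> nat \<Rightarrow> real" where "gw n a \<equiv> 1 / sqrt (real (wt n a))"

lemma Gb_cnj: "cnj (Gbasis n a x c) = Gbasis n a x c"
  unfolding Gbasis_def by simp

lemma Gb_cmod: "cmod (Gbasis n a x c) = (if x < nh n \<and> c < nh n \<and> x + c = a then gw n a else 0)"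
  unfolding Gbasis_def by (simp add: norm_divide)

lemma Gb_col: "(\<Sum>y<nh n. cmod (Gbasis n a y c)) \<le> gw n a"
proof -
  have "(\<Sum>y<nh n. cmod (Gbasis n a y c)) \<le> (\<Sum>y<nh n. if y = a - c then gw n a else 0)"
    unfolding Gb_cmod by (intro sum_mono) auto
  also have "\<dots> \<le> gw n a" by simp
  finally show ?thesis .
qed

lemma Gb_row: "(\<Sum>z<nh n. cmod (Gbasis n a x z)) \<le> gw n a"
proof -
  have "(\<Sum>z<nh n. cmod (Gbasis n a x z)) \<le> (\<Sum>z<nh n. if z = a - x then gw n a else 0)"
    unfolding Gb_cmod by (intro sum_mono) auto
  also have "\<dots> \<le> gw n a" by simp
  finally show ?thesis .
qed

lemma Gb_total: "(\<Sum>x<nh n. \<Sum>c<nh n. cmod (Gbasis n k x c)) = gw n k * real (wt n k)"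
proof -
  have "(\<Sum>x<nh n. \<Sum>c<nh n. cmod (Gbasis n k x c))
      = (\<Sum>xc\<in>{..<nh n} \<times> {..<nh n}. if fst xc + snd xc = k then gw n k else 0)"
    unfolding Gb_cmod sum.cartesian_product by (intro sum.cong) auto
  also have "\<dots> = (\<Sum>xc\<in>({..<nh n} \<times> {..<nh n}) \<inter> {xc. fst xc + snd xc = k}. gw n k)"
    by (simp add: sum.If_cases)
  also have "({..<nh n} \<times> {..<nh n}) \<inter> {xc. fst xc + snd xc = k} = {(j, k'). j < nh n \<and> k' < nh n \<and> j + k' = k}"
    by auto
  finally show ?thesis unfolding wt_def by simp
qed

lemma wt_pos: assumes "odd n" "a < n" shows "1 \<le> wt n a"
proof -
  define j where "j = (if a < nh n then a else nh n - 1)"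
  have n2: "n = 2 * nh n - 1" using assms unfolding nh_def by (auto elim!: oddE)
  have "j < nh n \<and> a - j < nh n \<and> j + (a - j) = a" using assms n2 unfolding j_def by auto
  hence "(j, a - j) \<in> {(j, k). j < nh n \<and> k < nh n \<and> j + k = a}" by auto
  moreover have "finite {(j, k). j < nh n \<and> k < nh n \<and> j + k = a}"
    by (rule finite_subset[of _ "{..<nh n} \<times> {..<nh n}"]) auto
  ultimately have "card {(j, k). j < nh n \<and> k < nh n \<and> j + k = a} > 0"
    by (subst card_gt_0_iff) blast
  thus ?thesis unfolding wt_def by simp
qed

lemma amgm_G:
  fixes f h :: "nat \<Rightarrow> real" and G :: "nat \<Rightarrow> nat \<Rightarrow> real"
  assumes "\<And>y z. 0 \<le> G y z" "\<And>y. (\<Sum>z<m. G y z) \<le> g" "\<And>z. (\<Sum>y<m. G y z) \<le> g"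
    "\<And>y. 0 \<le> f y" "\<And>z. 0 \<le> h z"
  shows "(\<Sum>y<m. \<Sum>z<m. f y * G y z * h z) \<le> g * ((\<Sum>y<m. (f y)\<^sup>2) + (\<Sum>z<m. (h z)\<^sup>2)) / 2"
proof -
  have "(\<Sum>y<m. \<Sum>z<m. f y * G y z * h z) \<le> (\<Sum>y<m. \<Sum>z<m. G y z * ((f y)\<^sup>2 + (h z)\<^sup>2) / 2)"
  proof (intro sum_mono)
    fix y z
    have "0 \<le> (f y - h z)\<^sup>2" by simp
    hence "f y * h z \<le> ((f y)\<^sup>2 + (h z)\<^sup>2) / 2" by (simp add: power2_eq_square algebra_simps)
    from mult_left_mono[OF this assms(1)[of y z]]
    show "f y * G y z * h z \<le> G y z * ((f y)\<^sup>2 + (h z)\<^sup>2) / 2" by (simp add: mult_ac)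
  qed
  also have "\<dots> = ((\<Sum>y<m. \<Sum>z<m. (f y)\<^sup>2 * G y z) + (\<Sum>y<m. \<Sum>z<m. (h z)\<^sup>2 * G y z)) / 2"
    by (simp add: sum.distrib[symmetric] sum_divide_distrib[symmetric] algebra_simps)
  also have "(\<Sum>y<m. \<Sum>z<m. (h z)\<^sup>2 * G y z) = (\<Sum>z<m. \<Sum>y<m. (h z)\<^sup>2 * G y z)"
    by (rule sum.swap)
  also have "((\<Sum>y<m. \<Sum>z<m. (f y)\<^sup>2 * G y z) + (\<Sum>z<m. \<Sum>y<m. (h z)\<^sup>2 * G y z)) / 2
     = ((\<Sum>y<m. (f y)\<^sup>2 * (\<Sum>z<m. G y z)) + (\<Sum>z<m. (h z)\<^sup>2 * (\<Sum>y<m. G y z))) / 2"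
    by (simp add: sum_distrib_left)
  also have "\<dots> \<le> ((\<Sum>y<m. (f y)\<^sup>2 * g) + (\<Sum>z<m. (h z)\<^sup>2 * g)) / 2"
    using assms by (intro divide_right_mono add_mono sum_mono mult_left_mono) auto
  also have "\<dots> = g * ((\<Sum>y<m. (f y)\<^sup>2) + (\<Sum>z<m. (h z)\<^sup>2)) / 2"
    unfolding sum_distrib_right[symmetric] by (simp add: algebra_simps)
  finally show ?thesis .
qed


lemma P_T_expand: "P_T n r U V W i x c = (\<Sum>y<nh n. pf r U i x y * W i y c) + (\<Sum>z<nh n. W i x z * pf r V i z c)
   - (\<Sum>y<nh n. \<Sum>z<nh n. pf r U i x y * W i y z * pf r V i z c)"
  unfolding P_T_def Let_def pf_def by simp

lemma PT_pt_bound: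
  assumes oU: "\<forall>s<r. \<forall>t<r. (\<Sum>j<nh n. cnj (U i j s) * U i j t) = (if s = t then 1 else 0)"
    and oV: "\<forall>s<r. \<forall>t<r. (\<Sum>j<nh n. cnj (V i j s) * V i j t) = (if s = t then 1 else 0)"
  shows "cmod (P_T n r U V (\<lambda>i x c. Gbasis n a x c) i x c)
    \<le> (\<Sum>y<nh n. (al r U i x + al r U i y) / 2 * cmod (Gbasis n a y c))
     + (\<Sum>z<nh n. cmod (Gbasis n a x z) * ((al r V i z + al r V i c) / 2))
     + gw n a * (al r U i x + al r V i c) / 2"
proof -
  let ?m = "nh n"
  have 1: "cmod (\<Sum>y<?m. pf r U i x y * Gbasis n a y c) \<le> (\<Sum>y<?m. (al r U i x + al r U i y) / 2 * cmod (Gbasis n a y c))"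
    by (rule order.trans[OF norm_sum], intro sum_mono, unfold norm_mult) (rule mult_right_mono[OF pf_bound norm_ge_zero])
  have 2: "cmod (\<Sum>z<?m. Gbasis n a x z * pf r V i z c) \<le> (\<Sum>z<?m. cmod (Gbasis n a x z) * ((al r V i z + al r V i c) / 2))"
    by (rule order.trans[OF norm_sum], intro sum_mono, unfold norm_mult) (rule mult_left_mono[OF pf_bound norm_ge_zero])
  have 3: "cmod (\<Sum>y<?m. \<Sum>z<?m. pf r U i x y * Gbasis n a y z * pf r V i z c)
      \<le> (\<Sum>y<?m. \<Sum>z<?m. cmod (pf r U i x y) * cmod (Gbasis n a y z) * cmod (pf r V i z c))"
    by (rule order.trans[OF norm_sum], intro sum_mono, rule order.trans[OF norm_sum]) (simp add: norm_mult)
  also have "\<dots> \<le> gw n a * ((\<Sum>y<?m. (cmod (pf r U i x y))\<^sup>2) + (\<Sum>z<?m. (cmod (pf r V i z c))\<^sup>2)) / 2"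
    by (rule amgm_G) (auto intro: Gb_row Gb_col)
  also have "(\<Sum>y<?m. (cmod (pf r U i x y))\<^sup>2) = al r U i x" using pf_bessel[where r=r and m="nh n" and U=U and i=i and x=x] oU by blast
  also have "(\<Sum>z<?m. (cmod (pf r V i z c))\<^sup>2) = al r V i c"
    using pf_bessel[where r=r and m="nh n" and U=V and i=i and x=c] oV by (simp add: pf_swap[of r V i _ c])
  finally have 3: "cmod (\<Sum>y<?m. \<Sum>z<?m. pf r U i x y * Gbasis n a y z * pf r V i z c) \<le> gw n a * (al r U i x + al r V i c) / 2" .
  show ?thesis unfolding P_T_expand
    by (rule order.trans[OF norm_triangle_ineq4], rule add_mono, rule order.trans[OF norm_triangle_ineq])
       (use 1 2 3 in auto)
qed

lemma avg_swap: "(1 / D) * (\<Sum>i<d. \<Sum>y<m. F i y * w y) = (\<Sum>y<m. ((1 / D) * (\<Sum>i<d. F i y)) * (w y::real))"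
  by (subst sum.swap) (simp add: sum_distrib_left sum_distrib_right mult_ac)

lemma avg_swap2: "(1 / D) * (\<Sum>i<d. \<Sum>y<m. w y * F i y) = (\<Sum>y<m. (w y::real) * ((1 / D) * (\<Sum>i<d. F i y)))"
  by (subst sum.swap) (simp add: sum_distrib_left sum_distrib_right mult_ac)

lemma avg_half: "(1 / D) * (\<Sum>i<d. (A i + B i) / 2) = ((1 / D) * (\<Sum>i<d. A i) + (1 / D) * (\<Sum>i<d. B i)) / (2::real)"
  by (simp add: sum.distrib sum_divide_distrib[symmetric] algebra_simps)

lemma PT_avg_bound:
  assumes oU: "\<forall>i<d. \<forall>s<r. \<forall>t<r. (\<Sum>j<nh n. cnj (U i j s) * U i j t) = (if s = t then 1 else 0)"
    and oV: "\<forall>i<d. \<forall>s<r. \<forall>t<r. (\<Sum>j<nh n. cnj (V i j s) * V i j t) = (if s = t then 1 else 0)"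
    and iU: "\<forall>y<nh n. (1 / real d) * (\<Sum>i<d. al r U i y) \<le> M"
    and iV: "\<forall>y<nh n. (1 / real d) * (\<Sum>i<d. al r V i y) \<le> M"
    and x: "x < nh n" and c: "c < nh n" and M: "0 \<le> M"
  shows "(1 / real d) * (\<Sum>i<d. cmod (P_T n r U V (\<lambda>i x c. Gbasis n a x c) i x c)) \<le> 3 * gw n a * M"
proof -
  let ?m = "nh n"
  define S1 where "S1 i = (\<Sum>y<?m. (al r U i x + al r U i y) / 2 * cmod (Gbasis n a y c))" for i
  define S2 where "S2 i = (\<Sum>z<?m. cmod (Gbasis n a x z) * ((al r V i z + al r V i c) / 2))" for i
  define S3 where "S3 i = gw n a * ((al r U i x + al r V i c) / 2)" for i
  have "(1 / real d) * (\<Sum>i<d. cmod (P_T n r U V (\<lambda>i x c. Gbasis n a x c) i x c))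
     \<le> (1 / real d) * (\<Sum>i<d. S1 i + S2 i + S3 i)"
    unfolding S1_def S2_def S3_def
    by (intro mult_left_mono sum_mono order.trans[OF PT_pt_bound]) (use oU oV in auto)
  also have "\<dots> = (1 / real d) * (\<Sum>i<d. S1 i) + (1 / real d) * (\<Sum>i<d. S2 i) + (1 / real d) * (\<Sum>i<d. S3 i)"
    by (simp add: sum.distrib algebra_simps)
  also have "(1 / real d) * (\<Sum>i<d. S1 i) \<le> gw n a * M"
  proof -
    have "(1 / real d) * (\<Sum>i<d. S1 i) = (\<Sum>y<?m. ((1 / real d) * (\<Sum>i<d. (al r U i x + al r U i y) / 2)) * cmod (Gbasis n a y c))"
      unfolding S1_def by (rule avg_swap)
    also have "\<dots> \<le> (\<Sum>y<?m. M * cmod (Gbasis n a y c))"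
    proof (intro sum_mono mult_right_mono)
      fix y assume "y \<in> {..<?m}"
      thus "(1 / real d) * (\<Sum>i<d. (al r U i x + al r U i y) / 2) \<le> M"
      proof -
        have h: "(1 / real d) * (\<Sum>i<d. al r U i x) \<le> M" "(1 / real d) * (\<Sum>i<d. al r U i y) \<le> M"
          using iU x \<open>y \<in> {..<?m}\<close> by auto
        show ?thesis unfolding avg_half using add_mono[OF h] by (simp add: field_simps)
      qed
    qed simp
    also have "\<dots> \<le> M * gw n a" unfolding sum_distrib_left[symmetric] by (rule mult_left_mono[OF Gb_col M])
    finally show ?thesis by (simp add: mult.commute)
  qed
  also have "(1 / real d) * (\<Sum>i<d. S2 i) \<le> gw n a * M"
  proof -
    have "(1 / real d) * (\<Sum>i<d. S2 i) = (\<Sum>z<?m. cmod (Gbasis n a x z) * ((1 / real d) * (\<Sum>i<d. (al r V i z + al r V i c) / 2)))"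
      unfolding S2_def by (rule avg_swap2)
    also have "\<dots> \<le> (\<Sum>z<?m. cmod (Gbasis n a x z) * M)"
    proof (intro sum_mono mult_left_mono)
      fix z assume "z \<in> {..<?m}"
      thus "(1 / real d) * (\<Sum>i<d. (al r V i z + al r V i c) / 2) \<le> M"
      proof -
        have h: "(1 / real d) * (\<Sum>i<d. al r V i z) \<le> M" "(1 / real d) * (\<Sum>i<d. al r V i c) \<le> M"
          using iV c \<open>z \<in> {..<?m}\<close> by auto
        show ?thesis unfolding avg_half using add_mono[OF h] by (simp add: field_simps)
      qed
    qed simp
    also have "\<dots> \<le> gw n a * M" unfolding sum_distrib_right[symmetric] by (rule mult_right_mono[OF Gb_row M])
    finally show ?thesis .
  qed
  also have "(1 / real d) * (\<Sum>i<d. S3 i) \<le> gw n a * M"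
  proof -
    have "(1 / real d) * (\<Sum>i<d. S3 i) = gw n a * ((1 / real d) * (\<Sum>i<d. (al r U i x + al r V i c) / 2))"
      unfolding S3_def sum_distrib_left[symmetric] by (simp only: mult_ac)
    also have "\<dots> \<le> gw n a * M"
    proof (intro mult_left_mono)
      have h: "(1 / real d) * (\<Sum>i<d. al r U i x) \<le> M" "(1 / real d) * (\<Sum>i<d. al r V i c) \<le> M"
        using iU iV x c by auto
      show "(1 / real d) * (\<Sum>i<d. (al r U i x + al r V i c) / 2) \<le> M" unfolding avg_half using add_mono[OF h] by (simp add: field_simps)
    qed simp
    finally show ?thesis .
  qed
  finally show ?thesis by simp
qed

lemma Ghat_basis_eq:
  assumes "l < d" "a < n"
  shows "Ghat_basis d n l a = (\<lambda>i x c. dft d i l * Gbasis n a x c)"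
proof (intro ext)
  fix i x c
  have "Ghat_basis d n l a i x c = (\<Sum>a'<n. (\<Sum>l'<d. dft d i l' * (if l' = l \<and> a' = a then 1 else 0)) * Gbasis n a' x c)"
    unfolding Ghat_basis_def Ghat_def hankel_def by simp
  also have "\<dots> = (\<Sum>a'<n. (if a' = a then dft d i l else 0) * Gbasis n a' x c)"
  proof (intro sum.cong refl)
    fix a' show "(\<Sum>l'<d. dft d i l' * (if l' = l \<and> a' = a then 1 else 0)) * Gbasis n a' x c = (if a' = a then dft d i l else 0) * Gbasis n a' x c"
      using assms by (cases "a' = a") (simp_all add: if_distrib[where f="\<lambda>z. _ * z"] cong: if_cong)
  qed
  also have "\<dots> = (\<Sum>a'<n. if a' = a then dft d i l * Gbasis n a' x c else 0)"
    by (intro sum.cong) auto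
  also have "\<dots> = dft d i l * Gbasis n a x c" using assms by simp
  finally show "Ghat_basis d n l a i x c = dft d i l * Gbasis n a x c" .
qed

lemma dft_norm: "cmod (dft d i l) = 1 / sqrt (real d)"
  unfolding dft_def by (simp add: norm_divide)

lemma P_T_scal: "P_T n r U V (\<lambda>i x c. f i * W i x c) i x c = f i * P_T n r U V W i x c"
  unfolding P_T_def Let_def by (simp add: sum_distrib_left algebra_simps)

lemma swap3: "(\<Sum>i<d. \<Sum>x<m. \<Sum>c<m'. F i x c * (w x c :: real)) = (\<Sum>x<m. \<Sum>c<m'. w x c * (\<Sum>i<d. F i x c))"
proof -
  have "(\<Sum>i<d. \<Sum>x<m. \<Sum>c<m'. F i x c * w x c) = (\<Sum>x<m. \<Sum>i<d. \<Sum>c<m'. F i x c * w x c)"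
    by (rule sum.swap)
  also have "\<dots> = (\<Sum>x<m. \<Sum>c<m'. \<Sum>i<d. F i x c * w x c)"
    by (intro sum.cong refl) (rule sum.swap)
  also have "\<dots> = (\<Sum>x<m. \<Sum>c<m'. w x c * (\<Sum>i<d. F i x c))"
    by (simp add: sum_distrib_left mult.commute)
  finally show ?thesis .
qed

lemma Kbound:
  assumes d: "1 \<le> d" and l: "l < d" and j: "j < d" and a: "a < n" and k: "k < n" and odd: "odd n"
    and oU: "\<forall>i<d. \<forall>s<r. \<forall>t<r. (\<Sum>j<nh n. cnj (U i j s) * U i j t) = (if s = t then 1 else 0)"
    and oV: "\<forall>i<d. \<forall>s<r. \<forall>t<r. (\<Sum>j<nh n. cnj (V i j s) * V i j t) = (if s = t then 1 else 0)"
    and iU: "\<forall>y<nh n. (1 / real d) * (\<Sum>i<d. al r U i y) \<le> M"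
    and iV: "\<forall>y<nh n. (1 / real d) * (\<Sum>i<d. al r V i y) \<le> M"
    and M: "0 \<le> M"
  shows "sqrt (real (wt n a)) * cmod (binner d n (P_T n r U V (Ghat_basis d n l a)) (Ghat_basis d n j k))
     \<le> 3 * M * sqrt (real (wt n k))"
proof -
  let ?m = "nh n"
  define PTa where "PTa = P_T n r U V (\<lambda>i x c. Gbasis n a x c)"
  have e: "P_T n r U V (Ghat_basis d n l a) i x c = dft d i l * PTa i x c" for i x c
    unfolding Ghat_basis_eq[OF l a] PTa_def by (rule P_T_scal)
  have "cmod (binner d n (P_T n r U V (Ghat_basis d n l a)) (Ghat_basis d n j k))
     = cmod (\<Sum>i<d. \<Sum>x<?m. \<Sum>c<?m. (dft d i l * PTa i x c) * cnj (dft d i j * Gbasis n k x c))"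
    unfolding binner_def e Ghat_basis_eq[OF j k] ..
  also have "\<dots> \<le> (\<Sum>i<d. \<Sum>x<?m. \<Sum>c<?m. cmod (PTa i x c) * ((1 / real d) * cmod (Gbasis n k x c)))"
  proof (rule order.trans[OF norm_sum], intro sum_mono, rule order.trans[OF norm_sum], intro sum_mono,
         rule order.trans[OF norm_sum], intro sum_mono)
    fix i x c
    have "sqrt (real d) * sqrt (real d) = real d" using d by simp
    thus "cmod (dft d i l * PTa i x c * cnj (dft d i j * Gbasis n k x c)) \<le> cmod (PTa i x c) * ((1 / real d) * cmod (Gbasis n k x c))"
      by (simp add: norm_mult dft_norm field_simps)
  qed
  also have "\<dots> = (\<Sum>x<?m. \<Sum>c<?m. cmod (Gbasis n k x c) * ((1 / real d) * (\<Sum>i<d. cmod (PTa i x c))))"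
    by (subst swap3) (simp add: mult_ac)
  also have "\<dots> \<le> (\<Sum>x<?m. \<Sum>c<?m. cmod (Gbasis n k x c) * (3 * gw n a * M))"
    unfolding PTa_def
    by (intro sum_mono mult_left_mono PT_avg_bound[OF oU oV iU iV _ _ M]) auto
  also have "\<dots> = (3 * gw n a * M) * (gw n k * real (wt n k))"
  proof -
    have "(\<Sum>x<?m. \<Sum>c<?m. cmod (Gbasis n k x c) * (3 * gw n a * M)) = (\<Sum>x<?m. \<Sum>c<?m. cmod (Gbasis n k x c)) * (3 * gw n a * M)"
      by (simp only: sum_distrib_right)
    thus ?thesis unfolding Gb_total by (simp only: mult_ac)
  qed
  finally have K: "cmod (binner d n (P_T n r U V (Ghat_basis d n l a)) (Ghat_basis d n j k)) \<le> (3 * gw n a * M) * (gw n k * real (wt n k))" .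
  have wa: "1 \<le> wt n a" and wk: "1 \<le> wt n k" using wt_pos odd a k by auto
  have "sqrt (real (wt n a)) * cmod (binner d n (P_T n r U V (Ghat_basis d n l a)) (Ghat_basis d n j k))
      \<le> sqrt (real (wt n a)) * ((3 * gw n a * M) * (gw n k * real (wt n k)))"
    by (rule mult_left_mono[OF K]) simp
  also have "\<dots> = 3 * M * (real (wt n k) / sqrt (real (wt n k)))"
    using wa by simp
  also have "real (wt n k) / sqrt (real (wt n k)) = sqrt (real (wt n k))"
    using wk by (simp add: real_div_sqrt)
  finally show ?thesis .
qed

lemma P_T_add: "P_T n r U V (\<lambda>i x c. A i x c + B i x c) i x c = P_T n r U V A i x c + P_T n r U V B i x c"
  unfolding P_T_def Let_def by (simp add: distrib_left distrib_right sum.distrib algebra_simps)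

lemma P_T_zero: "P_T n r U V (\<lambda>i x c. 0) i x c = 0"
  unfolding P_T_def Let_def by simp

lemma P_T_sum:
  assumes "finite Q"
  shows "P_T n r U V (\<lambda>i x c. \<Sum>q\<in>Q. f q * W q i x c) i x c = (\<Sum>q\<in>Q. f q * P_T n r U V (W q) i x c)"
  using assms
proof (induction Q rule: finite_induct)
  case empty thus ?case using P_T_zero by simp
next
  case (insert q Q)
  have "P_T n r U V (\<lambda>i x c. \<Sum>q'\<in>insert q Q. f q' * W q' i x c) i x c
      = P_T n r U V (\<lambda>i x c. f q * W q i x c + (\<Sum>q'\<in>Q. f q' * W q' i x c)) i x c"
    using insert.hyps by simp
  also have "\<dots> = f q * P_T n r U V (W q) i x c + P_T n r U V (\<lambda>i x c. \<Sum>q'\<in>Q. f q' * W q' i x c) i x c"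
    by (simp add: P_T_add P_T_scal[where f="\<lambda>_. f q"])
  finally show ?case using insert by simp
qed

lemma binner_sum:
  "binner d n (\<lambda>i x c. \<Sum>q\<in>Q. f q * B q i x c) W = (\<Sum>q\<in>Q. f q * binner d n (B q) W)"
  unfolding binner_def sum_distrib_right
  by (simp add: sum_distrib_left mult_ac sum.swap[of _ Q])

lemma Ghat_expand:
  "Ghat d n Y = (\<lambda>i x c. \<Sum>q\<in>{..<d} \<times> {..<n}. Y (fst q) (snd q) * Ghat_basis d n (fst q) (snd q) i x c)"
proof (intro ext)
  fix i x c
  have "(\<Sum>q\<in>{..<d} \<times> {..<n}. Y (fst q) (snd q) * Ghat_basis d n (fst q) (snd q) i x c)
      = (\<Sum>(l, a)\<in>{..<d} \<times> {..<n}. Y l a * (dft d i l * Gbasis n a x c))"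
    by (intro sum.cong refl) (auto simp: Ghat_basis_eq)
  also have "\<dots> = (\<Sum>l<d. \<Sum>a<n. Y l a * (dft d i l * Gbasis n a x c))"
    by (rule sum.cartesian_product[symmetric])
  also have "\<dots> = (\<Sum>a<n. \<Sum>l<d. Y l a * (dft d i l * Gbasis n a x c))" by (rule sum.swap)
  also have "\<dots> = Ghat d n Y i x c"
    unfolding Ghat_def hankel_def sum_distrib_right by (intro sum.cong refl) (simp add: mult_ac)
  finally show "Ghat d n Y i x c = (\<Sum>q\<in>{..<d} \<times> {..<n}. Y (fst q) (snd q) * Ghat_basis d n (fst q) (snd q) i x c)" ..
qed

lemma dev_expand:
  "binner d n (deviation d n r p \<Omega> U V Z) W
   = (\<Sum>q\<in>{..<d} \<times> {..<n}. (complex_of_real ((if q \<in> \<Omega> then 1 else 0) / p - 1) * Ghat_adj d n Z (fst q) (snd q))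
        * binner d n (P_T n r U V (Ghat_basis d n (fst q) (snd q))) W)"
proof -
  let ?S = "{..<d} \<times> {..<n}"
  let ?X = "Ghat_adj d n Z"
  let ?B = "\<lambda>q. P_T n r U V (Ghat_basis d n (fst q) (snd q))"
  have "deviation d n r p \<Omega> U V Z = (\<lambda>i x c. \<Sum>q\<in>?S. (complex_of_real ((if q \<in> \<Omega> then 1 else 0) / p - 1) * ?X (fst q) (snd q)) * ?B q i x c)"
  proof (intro ext)
    fix i x c
    have "deviation d n r p \<Omega> U V Z i x c
      = complex_of_real (1 / p) * (\<Sum>q\<in>?S. P_Omega \<Omega> ?X (fst q) (snd q) * ?B q i x c) - (\<Sum>q\<in>?S. ?X (fst q) (snd q) * ?B q i x c)"
      unfolding deviation_def Ghat_expand by (simp add: P_T_sum)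
    also have "\<dots> = (\<Sum>q\<in>?S. (complex_of_real ((if q \<in> \<Omega> then 1 else 0) / p - 1) * ?X (fst q) (snd q)) * ?B q i x c)"
      unfolding sum_distrib_left sum_subtractf[symmetric]
      by (intro sum.cong refl) (auto simp: P_Omega_def algebra_simps)
    finally show "deviation d n r p \<Omega> U V Z i x c = (\<Sum>q\<in>?S. (complex_of_real ((if q \<in> \<Omega> then 1 else 0) / p - 1) * ?X (fst q) (snd q)) * ?B q i x c)" .
  qed
  thus ?thesis by (simp add: binner_sum)
qed

lemma binner_Gb_adj:
  assumes "l < d" "a < n"
  shows "binner d n Z (Ghat_basis d n l a) = Ghat_adj d n Z l a"
  unfolding binner_def Ghat_adj_def Ghat_basis_eq[OF assms] by (simp add: mult_ac)

lemma normGinf_ge: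
  assumes "j < d" "k < n"
  shows "cmod (binner d n Z (Ghat_basis d n j k)) / sqrt (real d * real (wt n k)) \<le> normGinf d n Z"
  unfolding normGinf_def using assms by (intro Max_ge) auto

lemma normGinf_le:
  assumes "1 \<le> d" "1 \<le> n" "\<And>j k. j < d \<Longrightarrow> k < n \<Longrightarrow> cmod (binner d n Z (Ghat_basis d n j k)) / sqrt (real d * real (wt n k)) \<le> R"
  shows "normGinf d n Z \<le> R"
proof -
  have ne: "{..<d} \<noteq> {}" "{..<n} \<noteq> {}" using assms(1,2) by (auto simp: lessThan_empty_iff)
  show ?thesis unfolding normGinf_def using assms ne by (subst Max_le_iff) (auto simp: lessThan_empty_iff)
qed

lemma normGinf_nonneg: "1 \<le> d \<Longrightarrow> 1 \<le> n \<Longrightarrow> 0 \<le> normGinf d n Z"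
  using normGinf_ge[of 0 d 0 n Z] by (smt (verit) divide_nonneg_nonneg norm_ge_zero real_sqrt_ge_zero of_nat_0_le_iff mult_nonneg_nonneg less_le_trans zero_less_one le_trans)

lemma normGF_sq: "(normGF d n Z)\<^sup>2 = (\<Sum>q\<in>{..<d} \<times> {..<n}. (cmod (binner d n Z (Ghat_basis d n (fst q) (snd q))))\<^sup>2 / (real d * real (wt n (snd q))))"
proof -
  have "(\<Sum>j<d. \<Sum>k<n. (cmod (binner d n Z (Ghat_basis d n j k)))\<^sup>2 / (real d * real (wt n k)))
     = (\<Sum>q\<in>{..<d} \<times> {..<n}. (cmod (binner d n Z (Ghat_basis d n (fst q) (snd q))))\<^sup>2 / (real d * real (wt n (snd q))))"
    by (simp add: sum.cartesian_product split_def)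
  moreover have "0 \<le> (\<Sum>j<d. \<Sum>k<n. (cmod (binner d n Z (Ghat_basis d n j k)))\<^sup>2 / (real d * real (wt n k)))"
    by (intro sum_nonneg) auto
  ultimately show ?thesis unfolding normGF_def by simp
qed

lemma devsum_neg: "devsum S p (\<lambda>q. - b q) \<Omega> = - devsum S p b \<Omega>"
  unfolding devsum_def by (simp add: sum_negf)

lemma bern_bp: "bernoulli_prob d n p E = bp ({..<d} \<times> {..<n}) p E"
proof -
  have c: "card ({..<d} \<times> {..<n}) = d * n" by (simp add: card_cartesian_product)
  show ?thesis unfolding bernoulli_prob_def bp_def wgt_def c by (rule refl)
qed

lemma main_fixed:
  assumes d: "1 \<le> d" and n: "1 \<le> n" and odd: "odd n" and p: "0 < p" "p \<le> 1"
    and svd: "compact_svd d n r Zn U \<sigma> V" and inc: "avg_incoherent d n r \<mu>0 U V"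
  shows "bernoulli_prob d n p (\<lambda>\<Omega>.
         normGinf d n (deviation d n r p \<Omega> U V Z)
           \<le> 24 * (\<mu>0 * real r / real n) *
              (sqrt (ln (real (d * n)) / p) * normGF d n Z
               + ln (real (d * n)) / p * normGinf d n Z))
        \<ge> 1 - 4 * real (d * n) powr (- 1)"
proof -
  define S where "S = {..<d} \<times> {..<n}"
  define M where "M = \<mu>0 * real r / real n"
  define L where "L = ln (real (d * n))"
  define lam where "lam = 2 * L"
  define F where "F = normGF d n Z"
  define I where "I = normGinf d n Z"
  define X where "X q = binner d n Z (Ghat_basis d n (fst q) (snd q))" for q
  define K where "K jk q = binner d n (P_T n r U V (Ghat_basis d n (fst q) (snd q))) (Ghat_basis d n (fst jk) (snd jk))" for jk q
  define sw where "sw jk = sqrt (real d * real (wt n (snd jk)))" for jk :: "nat \<times> nat"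
  define qc where "qc jk q = X q * K jk q / complex_of_real (sw jk)" for jk q
  define ent where "ent jk \<Omega> = binner d n (deviation d n r p \<Omega> U V Z) (Ghat_basis d n (fst jk) (snd jk)) / complex_of_real (sw jk)" for jk \<Omega>
  define bf where "bf jk t = (\<lambda>q. if t = (0::nat) then Re (qc jk q) else if t = 1 then - Re (qc jk q)
      else if t = 2 then Im (qc jk q) else - Im (qc jk q))" for jk t
  define B0 where "B0 = 3 * M * I"
  define thr where "thr jk t = 2 * sqrt (lam * (\<Sum>q\<in>S. (bf jk t q)\<^sup>2) / p) + 2 * lam * B0 / p" for jk t
  define T0 where "T0 = 2 * sqrt (lam * (9 * M\<^sup>2 * F\<^sup>2) / p) + 2 * lam * B0 / p"
  have finS: "finite S" unfolding S_def by simp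
  have "1 \<le> d * n" using d n by (metis mult_le_mono nat_mult_1)
  hence dn1: "1 \<le> real (d * n)" by linarith
  have L0: "0 \<le> L" unfolding L_def using dn1 by simp
  have lam0: "0 \<le> lam" unfolding lam_def using L0 by simp
  have I0: "0 \<le> I" unfolding I_def using normGinf_nonneg d n by blast
  have F0: "0 \<le> F" unfolding F_def normGF_def by (intro real_sqrt_ge_zero sum_nonneg) auto
  have oU: "\<forall>i<d. \<forall>s<r. \<forall>t<r. (\<Sum>j<nh n. cnj (U i j s) * U i j t) = (if s = t then 1 else 0)"
    and oV: "\<forall>i<d. \<forall>s<r. \<forall>t<r. (\<Sum>j<nh n. cnj (V i j s) * V i j t) = (if s = t then 1 else 0)"
    using svd unfolding compact_svd_def by auto
  have iU: "\<forall>y<nh n. (1 / real d) * (\<Sum>i<d. al r U i y) \<le> M"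
    and iV: "\<forall>y<nh n. (1 / real d) * (\<Sum>i<d. al r V i y) \<le> M"
    using inc unfolding avg_incoherent_def M_def al_def by auto
  have M0: "0 \<le> M"
  proof -
    have "0 < nh n" unfolding nh_def using n by linarith
    hence "(1 / real d) * (\<Sum>i<d. al r U i 0) \<le> M" using iU by auto
    moreover have "0 \<le> (1 / real d) * (\<Sum>i<d. al r U i 0)" by (intro mult_nonneg_nonneg sum_nonneg al_nonneg) auto
    ultimately show ?thesis by linarith
  qed
  have B00: "0 \<le> B0" unfolding B0_def using M0 I0 by simp
  have Kb: "sqrt (real (wt n (snd q))) * cmod (K jk q) \<le> 3 * M * sqrt (real (wt n (snd jk)))"
    if "jk \<in> S" "q \<in> S" for jk q
    unfolding K_def using that d odd
    by (intro Kbound[OF d _ _ _ _ odd oU oV iU iV M0]) (auto simp: S_def)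
  have Xb: "cmod (X q) / sqrt (real d * real (wt n (snd q))) \<le> I" if "q \<in> S" for q
    unfolding X_def I_def using that by (intro normGinf_ge) (auto simp: S_def)
  have qc_eq: "cmod (qc jk q) = (cmod (X q) / sqrt (real d * real (wt n (snd q)))) * (sqrt (real (wt n (snd q))) * cmod (K jk q) / sqrt (real (wt n (snd jk))))"
    if "jk \<in> S" "q \<in> S" for jk q
  proof -
    have "1 \<le> wt n (snd q)" "1 \<le> wt n (snd jk)" using that wt_pos odd by (auto simp: S_def)
    thus ?thesis unfolding qc_def sw_def using d
      by (simp add: norm_divide norm_mult real_sqrt_mult field_simps)
  qed
  have rat: "sqrt (real (wt n (snd q))) * cmod (K jk q) / sqrt (real (wt n (snd jk))) \<le> 3 * M"
    if "jk \<in> S" "q \<in> S" for jk q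
  proof -
    have "1 \<le> wt n (snd jk)" using that wt_pos odd by (auto simp: S_def)
    thus ?thesis using Kb[OF that] by (simp add: divide_le_eq)
  qed
  have qc_b: "cmod (qc jk q) \<le> B0" if "jk \<in> S" "q \<in> S" for jk q
    unfolding qc_eq[OF that] B0_def
    using mult_mono[OF Xb[OF that(2)] rat[OF that] I0] by (simp add: mult_ac)
  have qc_sq: "(\<Sum>q\<in>S. (cmod (qc jk q))\<^sup>2) \<le> 9 * M\<^sup>2 * F\<^sup>2" if "jk \<in> S" for jk
  proof -
    have "(\<Sum>q\<in>S. (cmod (qc jk q))\<^sup>2) \<le> (\<Sum>q\<in>S. (cmod (X q) / sqrt (real d * real (wt n (snd q))))\<^sup>2 * (3 * M)\<^sup>2)"
    proof (intro sum_mono)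
      fix q assume q: "q \<in> S"
      have "0 \<le> sqrt (real (wt n (snd q))) * cmod (K jk q) / sqrt (real (wt n (snd jk)))" by simp
      hence "(sqrt (real (wt n (snd q))) * cmod (K jk q) / sqrt (real (wt n (snd jk))))\<^sup>2 \<le> (3 * M)\<^sup>2"
        using rat[OF that q] by (intro power_mono) auto
      thus "(cmod (qc jk q))\<^sup>2 \<le> (cmod (X q) / sqrt (real d * real (wt n (snd q))))\<^sup>2 * (3 * M)\<^sup>2"
        unfolding qc_eq[OF that q] power_mult_distrib by (intro mult_left_mono) auto
    qed
    also have "\<dots> = 9 * M\<^sup>2 * (\<Sum>q\<in>S. (cmod (X q))\<^sup>2 / (real d * real (wt n (snd q))))"
      by (simp add: sum_distrib_left power_divide power_mult_distrib mult_ac)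
    also have "(\<Sum>q\<in>S. (cmod (X q))\<^sup>2 / (real d * real (wt n (snd q)))) = F\<^sup>2"
      unfolding F_def normGF_sq S_def X_def ..
    finally show ?thesis .
  qed
  have bf_b: "\<bar>bf jk t q\<bar> \<le> B0" if "jk \<in> S" "q \<in> S" for jk t q
    using qc_b[OF that] abs_Re_le_cmod[of "qc jk q"] abs_Im_le_cmod[of "qc jk q"]
    unfolding bf_def by auto
  have thr_le: "thr jk t \<le> T0" if "jk \<in> S" for jk t
  proof -
    have "(\<Sum>q\<in>S. (bf jk t q)\<^sup>2) \<le> (\<Sum>q\<in>S. (cmod (qc jk q))\<^sup>2)"
    proof (intro sum_mono)
      fix q
      have "\<bar>bf jk t q\<bar> \<le> cmod (qc jk q)"
        using abs_Re_le_cmod[of "qc jk q"] abs_Im_le_cmod[of "qc jk q"] unfolding bf_def by auto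
      thus "(bf jk t q)\<^sup>2 \<le> (cmod (qc jk q))\<^sup>2" by (metis abs_ge_zero power2_abs power_mono)
    qed
    also have "\<dots> \<le> 9 * M\<^sup>2 * F\<^sup>2" by (rule qc_sq[OF that])
    finally have "lam * (\<Sum>q\<in>S. (bf jk t q)\<^sup>2) / p \<le> lam * (9 * M\<^sup>2 * F\<^sup>2) / p"
      using lam0 p by (intro divide_right_mono mult_left_mono) auto
    thus ?thesis unfolding thr_def T0_def by simp
  qed
  have ent_eq: "ent jk \<Omega> = (\<Sum>q\<in>S. complex_of_real ((if q \<in> \<Omega> then 1 else 0) / p - 1) * qc jk q)" if "jk \<in> S" for jk \<Omega>
  proof -
    have "ent jk \<Omega> = (\<Sum>q\<in>S. (complex_of_real ((if q \<in> \<Omega> then 1 else 0) / p - 1) * Ghat_adj d n Z (fst q) (snd q)) * K jk q) / complex_of_real (sw jk)"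
      unfolding ent_def dev_expand S_def K_def ..
    also have "\<dots> = (\<Sum>q\<in>S. complex_of_real ((if q \<in> \<Omega> then 1 else 0) / p - 1) * qc jk q)"
      unfolding sum_divide_distrib qc_def X_def
      by (intro sum.cong refl) (auto simp: S_def binner_Gb_adj)
    finally show ?thesis .
  qed
  have Re_ent: "Re (ent jk \<Omega>) = devsum S p (\<lambda>q. Re (qc jk q)) \<Omega>" if "jk \<in> S" for jk \<Omega>
    unfolding ent_eq[OF that] devsum_def by (simp add: Re_sum)
  have Im_ent: "Im (ent jk \<Omega>) = devsum S p (\<lambda>q. Im (qc jk q)) \<Omega>" if "jk \<in> S" for jk \<Omega>
    unfolding ent_eq[OF that] devsum_def by (simp add: Im_sum)
  define bad where "bad \<Omega> = (\<exists>y\<in>S \<times> {..<4::nat}. devsum S p (bf (fst y) (snd y)) \<Omega> > thr (fst y) (snd y))" for \<Omega>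
  have good: "normGinf d n (deviation d n r p \<Omega> U V Z) \<le> 24 * M * (sqrt (L / p) * F + L / p * I)"
    if nb: "\<not> bad \<Omega>" for \<Omega>
  proof (rule normGinf_le[OF d n])
    fix j k assume jk: "j < d" "k < n"
    hence jkS: "(j, k) \<in> S" unfolding S_def by simp
    have h: "devsum S p (bf (j, k) t) \<Omega> \<le> T0" if "t < 4" for t
    proof -
      have "devsum S p (bf (j, k) t) \<Omega> \<le> thr (j, k) t" using nb that jkS unfolding bad_def by force
      thus ?thesis using thr_le[OF jkS, of t] by linarith
    qed
    have bf0: "bf (j, k) 0 = (\<lambda>q. Re (qc (j, k) q))" and bf1: "bf (j, k) 1 = (\<lambda>q. - Re (qc (j, k) q))"
      and bf2: "bf (j, k) 2 = (\<lambda>q. Im (qc (j, k) q))" and bf3: "bf (j, k) 3 = (\<lambda>q. - Im (qc (j, k) q))"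
      unfolding bf_def by auto
    have "\<bar>Re (ent (j, k) \<Omega>)\<bar> \<le> T0"
      using h[of 0] h[of 1] unfolding bf0 bf1 devsum_neg Re_ent[OF jkS] by auto
    moreover have "\<bar>Im (ent (j, k) \<Omega>)\<bar> \<le> T0"
      using h[of 2] h[of 3] unfolding bf2 bf3 devsum_neg Im_ent[OF jkS] by auto
    ultimately have "cmod (ent (j, k) \<Omega>) \<le> 2 * T0" using cmod_le[of "ent (j, k) \<Omega>"] by linarith
    moreover have "cmod (ent (j, k) \<Omega>) = cmod (binner d n (deviation d n r p \<Omega> U V Z) (Ghat_basis d n j k)) / sqrt (real d * real (wt n k))"
      unfolding ent_def sw_def by (simp add: norm_divide)
    moreover have "2 * T0 \<le> 24 * M * (sqrt (L / p) * F + L / p * I)"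
    proof -
      have s: "sqrt (lam * (9 * M\<^sup>2 * F\<^sup>2) / p) = 3 * M * F * sqrt 2 * sqrt (L / p)"
      proof -
        have e18: "sqrt 18 = 3 * sqrt (2::real)" using real_sqrt_mult[of 9 2] by simp
        show ?thesis unfolding lam_def using M0 F0 e18 by (simp add: real_sqrt_mult real_sqrt_divide)
      qed
      have "sqrt (2::real) \<le> sqrt (2\<^sup>2)" by (intro real_sqrt_le_mono) simp
      hence s2: "sqrt 2 \<le> (2::real)" by simp
      have "3 * M * F * sqrt 2 * sqrt (L / p) \<le> 3 * M * F * 2 * sqrt (L / p)"
        using M0 F0 s2 L0 p by (intro mult_right_mono mult_left_mono) auto
      moreover have "2 * T0 = 2 * (2 * (3 * M * F * sqrt 2 * sqrt (L / p)) + 2 * lam * B0 / p)"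
        unfolding T0_def s ..
      ultimately show ?thesis unfolding B0_def lam_def by (simp add: algebra_simps)
    qed
    ultimately show "cmod (binner d n (deviation d n r p \<Omega> U V Z) (Ghat_basis d n j k)) / sqrt (real d * real (wt n k))
        \<le> 24 * M * (sqrt (L / p) * F + L / p * I)" by linarith
  qed
  have pbad: "bp S p bad \<le> 4 * real (d * n) * exp (- lam)"
  proof -
    have "bp S p bad \<le> (\<Sum>y\<in>S \<times> {..<4::nat}. bp S p (\<lambda>\<Omega>. devsum S p (bf (fst y) (snd y)) \<Omega> > thr (fst y) (snd y)))"
      unfolding bad_def using finS p by (intro bp_union) auto
    also have "\<dots> \<le> (\<Sum>y\<in>S \<times> {..<4::nat}. exp (- lam))"
    proof (intro sum_mono)
      fix y assume y: "y \<in> S \<times> {..<4::nat}"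
      show "bp S p (\<lambda>\<Omega>. devsum S p (bf (fst y) (snd y)) \<Omega> > thr (fst y) (snd y)) \<le> exp (- lam)"
        unfolding thr_def using y bf_b B00 lam0
        by (intro tail_bound[OF finS p]) auto
    qed
    also have "\<dots> = 4 * real (d * n) * exp (- lam)"
      unfolding S_def by (simp add: card_cartesian_product)
    finally show ?thesis .
  qed
  have ex: "4 * real (d * n) * exp (- lam) = 4 * real (d * n) powr (- 1)"
  proof -
    have e1: "exp L = real (d * n)" unfolding L_def using dn1 by simp
    have "lam = L + L" unfolding lam_def by simp
    hence "exp (- lam) = inverse (exp (L + L))" using exp_minus by metis
    also have "exp (L + L) = exp L * exp L" by (rule exp_add)
    finally have "exp (- lam) = inverse (exp L * exp L)" .
    hence "exp (- lam) = 1 / (real (d * n) * real (d * n))" unfolding e1 by (simp add: divide_inverse)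
    hence "4 * real (d * n) * exp (- lam) = 4 * (1 / real (d * n))" using dn1 by (simp add: field_simps)
    also have "1 / real (d * n) = real (d * n) powr (- 1)" using dn1 by (simp add: powr_neg_one)
    finally show ?thesis .
  qed
  have "bernoulli_prob d n p (\<lambda>\<Omega>. normGinf d n (deviation d n r p \<Omega> U V Z)
           \<le> 24 * (\<mu>0 * real r / real n) * (sqrt (ln (real (d * n)) / p) * normGF d n Z
               + ln (real (d * n)) / p * normGinf d n Z))
      \<ge> bp S p (\<lambda>\<Omega>. \<not> bad \<Omega>)"
    unfolding bern_bp S_def[symmetric] M_def[symmetric] L_def[symmetric] F_def[symmetric] I_def[symmetric]
    using p by (intro bp_mono good) auto
  moreover have "bp S p (\<lambda>\<Omega>. \<not> bad \<Omega>) = 1 - bp S p bad"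
    using bp_compl[OF finS, of p "\<lambda>\<Omega>. \<not> bad \<Omega>"] by simp
  ultimately show ?thesis using pbad ex by linarith
qed

theorem lemma4p5:
  shows "\<exists>C>0. \<exists>c1>0. \<exists>c2>0. \<forall>(d::nat) (n::nat) (r::nat) (\<mu>0::real) (p::real)
      (Zn :: nat \<Rightarrow> nat \<Rightarrow> nat \<Rightarrow> complex) U V (\<sigma> :: nat \<Rightarrow> nat \<Rightarrow> real)
      (Z :: nat \<Rightarrow> nat \<Rightarrow> nat \<Rightarrow> complex).
      1 \<le> d \<longrightarrow> 1 \<le> n \<longrightarrow> odd n \<longrightarrow> 0 < p \<longrightarrow> p \<le> 1 \<longrightarrow>
      compact_svd d n r Zn U \<sigma> V \<longrightarrow> avg_incoherent d n r \<mu>0 U V \<longrightarrow>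
      bernoulli_prob d n p (\<lambda>\<Omega>.
         normGinf d n (deviation d n r p \<Omega> U V Z)
           \<le> C * (\<mu>0 * real r / real n) *
              (sqrt (ln (real (d * n)) / p) * normGF d n Z
               + ln (real (d * n)) / p * normGinf d n Z))
        \<ge> 1 - c1 * real (d * n) powr (- c2)"
  apply (rule exI[of _ 24], rule conjI, simp)
  apply (rule exI[of _ 4], rule conjI, simp)
  apply (rule exI[of _ 1], rule conjI, simp)
  apply (intro allI impI)
  apply (rule main_fixed)
  apply assumption+
  done

end
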